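(* Let $V$ be an indecomposable Whittaker module of type $\eta$ over $R$ with cyclic Whittaker vector $w$, and suppose $Z_V=(p(\Omega)^n)$ where $p$ is an irreducible polynomial and $n\ge 1$. Then every submodule $V'\subseteq V$ is of the form $V'=Rp(\Omega)^iw$ for some $i\in\{0,\dots,n\}$.
   Context: Let $f\in\mathbb{C}[H]$ be a polynomial. $R=R(f)$ is the associative $\mathbb{C}$-algebra generated by $E,F,H$ with relations $EF-FE=f(H)$, $HE-EH=E$, $HF-FH=-F$. Let $u\in\mathbb{C}[H]$ satisfy $f(H)=\tfrac12(u(H+1)-u(H))$ and $\Omega=2FE+u(H+1)$; the center $Z(R)$ is the polynomial ring $\mathbb{C}[\Omega]$. Let $R(E)=\mathbb{C}[E]$ and fix an algebra homomorphism $\eta:R(E)\to\mathbb{C}$ with $\eta(E)\neq0$. A vector $v$ of an $R$-module $V$ is a Whittaker vector of type $\eta$ if $Ev=\eta(E)v$; $V$ is a Whittaker module of type $\eta$ with cyclic Whittaker vector $w$ if $w$ is a Whittaker vector and $V=Rw$. $Z_V=\mathrm{Ann}_R(V)\cap Z(R)$. *)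

theory Defs
  imports Complex_Main "HOL-Computational_Algebra.Polynomial"
begin

text \<open>An R(f)-module structure on it is given by the action of the generators E, F, H as linear maps.\<close>

definition poly_op :: "(complex \<Rightarrow> 'v \<Rightarrow> 'v) \<Rightarrow> complex poly \<Rightarrow> ('v \<Rightarrow> 'v) \<Rightarrow> 'v \<Rightarrow> 'v::ab_group_add"
  where "poly_op sc q T v = (\<Sum>k\<le>degree q. sc (coeff q k) ((T ^^ k) v))"

definition is_R_module ::
  "(complex \<Rightarrow> 'v::ab_group_add \<Rightarrow> 'v) \<Rightarrow> complex poly \<Rightarrow> ('v \<Rightarrow> 'v) \<Rightarrow> ('v \<Rightarrow> 'v) \<Rightarrow> ('v \<Rightarrow> 'v) \<Rightarrow> bool"
  where "is_R_module sc fp E F H \<longleftrightarrow>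
     vector_space sc \<and>
     Vector_Spaces.linear sc sc E \<and> Vector_Spaces.linear sc sc F \<and> Vector_Spaces.linear sc sc H \<and>
     (\<forall>v. E (F v) - F (E v) = poly_op sc fp H v) \<and>
     (\<forall>v. H (E v) - E (H v) = E v) \<and>
     (\<forall>v. H (F v) - F (H v) = - F v)"

text \<open>R-submodules: subspaces stable under E, F, H (R is generated by E, F, H).\<close>
definition is_submodule ::
  "(complex \<Rightarrow> 'v \<Rightarrow> 'v) \<Rightarrow> ('v \<Rightarrow> 'v) \<Rightarrow> ('v \<Rightarrow> 'v) \<Rightarrow> ('v \<Rightarrow> 'v) \<Rightarrow> 'v::ab_group_add set \<Rightarrow> bool"
  where "is_submodule sc E F H S \<longleftrightarrow> module.subspace sc S \<and> E ` S \<subseteq> S \<and> F ` S \<subseteq> S \<and> H ` S \<subseteq> S"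

definition gen_submodule ::
  "(complex \<Rightarrow> 'v \<Rightarrow> 'v) \<Rightarrow> ('v \<Rightarrow> 'v) \<Rightarrow> ('v \<Rightarrow> 'v) \<Rightarrow> ('v \<Rightarrow> 'v) \<Rightarrow> 'v::ab_group_add set \<Rightarrow> 'v set"
  where "gen_submodule sc E F H X = \<Inter>{S. is_submodule sc E F H S \<and> X \<subseteq> S}"

definition Omega_op ::
  "(complex \<Rightarrow> 'v \<Rightarrow> 'v) \<Rightarrow> complex poly \<Rightarrow> ('v \<Rightarrow> 'v) \<Rightarrow> ('v \<Rightarrow> 'v) \<Rightarrow> ('v \<Rightarrow> 'v) \<Rightarrow> 'v \<Rightarrow> 'v::ab_group_add"
  where "Omega_op sc u E F H v = sc 2 (F (E v)) + poly_op sc (pcompose u [:1, 1:]) H v"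

definition indecomposable ::
  "(complex \<Rightarrow> 'v \<Rightarrow> 'v) \<Rightarrow> ('v \<Rightarrow> 'v) \<Rightarrow> ('v \<Rightarrow> 'v) \<Rightarrow> ('v \<Rightarrow> 'v) \<Rightarrow> 'v::ab_group_add itself \<Rightarrow> bool"
  where "indecomposable sc E F H _ \<longleftrightarrow> (UNIV :: 'v set) \<noteq> {0} \<and>
     (\<forall>A B. is_submodule sc E F H A \<and> is_submodule sc E F H B \<and> A \<inter> B = {0} \<and>
        {a + b | a b. a \<in> A \<and> b \<in> B} = UNIV \<longrightarrow> A = {0} \<or> B = {0})"

end

theory Submission
  imports Defs "HOL-Computational_Algebra.Polynomial_Factorial" "HOL-Computational_Algebra.Field_as_Ring"
begin

locale VS = vector_space sc for sc :: "complex \<Rightarrow> 'v::ab_group_add \<Rightarrow> 'v"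
context VS
begin

definition lin :: "('v \<Rightarrow> 'v) \<Rightarrow> bool" where
  "lin T \<longleftrightarrow> (\<forall>x y. T (x + y) = T x + T y) \<and> (\<forall>c x. T (sc c x) = sc c (T x))"

lemma linD: "lin T \<Longrightarrow> T (x + y) = T x + T y" "lin T \<Longrightarrow> T (sc c x) = sc c (T x)"
  by (auto simp: lin_def)

lemma lin_zero: "lin T \<Longrightarrow> T 0 = 0"
  using linD(2)[of T 0 0] by simp

lemma lin_minus: "lin T \<Longrightarrow> T (- x) = - T x"
  using linD(2)[of T "-1" x] by simp

lemma lin_diff: "lin T \<Longrightarrow> T (x - y) = T x - T y"
  using linD(1)[of T x "-y"] lin_minus[of T y] by simp

lemma lin_comp: "lin S \<Longrightarrow> lin T \<Longrightarrow> lin (\<lambda>x. S (T x))"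
  by (auto simp: lin_def)

lemma lin_funpow: "lin T \<Longrightarrow> lin (T ^^ n)"
  by (induction n) (auto simp: lin_def)

lemma lin_funpow_zero: "lin T \<Longrightarrow> (T ^^ n) 0 = 0"
  using lin_zero[OF lin_funpow] by blast

lemma pop_N: "degree q \<le> N \<Longrightarrow> poly_op sc q T v = (\<Sum>k\<le>N. sc (coeff q k) ((T ^^ k) v))"
  unfolding poly_op_def
  by (rule sum.mono_neutral_left) (auto simp: coeff_eq_0)

lemma pop0 [simp]: "poly_op sc 0 T v = 0"
  by (simp add: poly_op_def)

lemma pop_pCons: assumes "lin T"
  shows "poly_op sc (pCons a p) T v = sc a v + T (poly_op sc p T v)"
proof -
  have "poly_op sc (pCons a p) T v = (\<Sum>k\<le>Suc (degree p). sc (coeff (pCons a p) k) ((T ^^ k) v))"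
    by (rule pop_N) (simp add: degree_pCons_le)
  also have "\<dots> = sc a v + (\<Sum>k\<le>degree p. sc (coeff p k) ((T ^^ Suc k) v))"
    by (subst sum.atMost_Suc_shift) simp
  also have "(\<Sum>k\<le>degree p. sc (coeff p k) ((T ^^ Suc k) v)) = T (poly_op sc p T v)"
  proof -
    interpret a: additive T using assms by unfold_locales (simp add: lin_def)
    show ?thesis unfolding poly_op_def a.sum using assms by (simp add: lin_def)
  qed
  finally show ?thesis .
qed

lemma pop_add: "poly_op sc (p + q) T v = poly_op sc p T v + poly_op sc q T v"
proof -
  let ?N = "max (degree p) (degree q)"
  have "poly_op sc (p + q) T v = (\<Sum>k\<le>?N. sc (coeff (p+q) k) ((T ^^ k) v))"
    by (rule pop_N) (simp add: degree_add_le)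
  also have "\<dots> = (\<Sum>k\<le>?N. sc (coeff p k) ((T ^^ k) v)) + (\<Sum>k\<le>?N. sc (coeff q k) ((T ^^ k) v))"
    by (simp add: scale_left_distrib sum.distrib)
  also have "\<dots> = poly_op sc p T v + poly_op sc q T v"
    by (simp add: pop_N[symmetric])
  finally show ?thesis .
qed

lemma pop_smult: "poly_op sc (smult c p) T v = sc c (poly_op sc p T v)"
proof -
  have "poly_op sc (smult c p) T v = (\<Sum>k\<le>degree p. sc (coeff (smult c p) k) ((T ^^ k) v))"
    by (rule pop_N) simp
  also have "\<dots> = sc c (poly_op sc p T v)"
    by (simp add: poly_op_def scale_sum_right)
  finally show ?thesis .
qed

lemma pop_minus: "poly_op sc (- p) T v = - poly_op sc p T v"
  using pop_smult[where c="-1" and p=p and T=T and v=v] by simp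

lemma pop_diff: "poly_op sc (p - q) T v = poly_op sc p T v - poly_op sc q T v"
  using pop_add[where p=p and q="-q" and T=T and v=v] pop_minus[where p=q and T=T and v=v] by simp

lemma pop_const [simp]: "poly_op sc [:c:] T v = sc c v"
  by (simp add: poly_op_def)

lemma pop_one [simp]: "poly_op sc 1 T v = v"
  by (simp add: poly_op_def)

lemma pop_X: "lin T \<Longrightarrow> poly_op sc [:0,1:] T v = T v"
  by (simp add: pop_pCons)

lemma pop_lin: assumes "lin T" shows "lin (poly_op sc q T)"
  using assms
  by (induction q) (auto simp: lin_def pop_pCons scale_right_distrib)

lemma pop_mult: assumes "lin T"
  shows "poly_op sc (p * q) T v = poly_op sc p T (poly_op sc q T v)"
  by (induction p) (simp_all add: pop_add pop_smult pop_pCons assms)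

lemma pop_intertwine: assumes "lin A" "lin T" "lin S" "\<And>x. A (T x) = S (A x)"
  shows "A (poly_op sc q T v) = poly_op sc q S (A v)"
  by (induction q) (simp_all add: pop_pCons assms linD lin_zero)

lemma pop_pcompose: assumes "lin T"
  shows "poly_op sc (pcompose p r) T v = poly_op sc p (poly_op sc r T) v"
  by (induction p) (simp_all add: pcompose_pCons pop_add pop_mult pop_pCons assms pop_lin)

lemma pop_closed: assumes "subspace S" "\<And>x. x \<in> S \<Longrightarrow> T x \<in> S" "lin T" "v \<in> S"
  shows "poly_op sc q T v \<in> S"
  by (induction q) (simp_all add: pop_pCons assms subspace_0 subspace_add subspace_scale)

end

locale WS = VS sc for sc :: "complex \<Rightarrow> 'v::ab_group_add \<Rightarrow> 'v" +
  fixes fp u :: "complex poly" and E F H :: "'v \<Rightarrow> 'v" and eta :: complex and w :: 'v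
  assumes u_def: "fp = smult (1/2) (pcompose u [:1, 1:] - u)"
    and Rmod: "is_R_module sc fp E F H"
    and eta_nz: "eta \<noteq> 0"
    and whit: "E w = sc eta w"
    and cyclic: "gen_submodule sc E F H {w} = UNIV"
begin

lemma linE: "lin E" and linF: "lin F" and linH: "lin H"
  using Rmod unfolding is_R_module_def Vector_Spaces.linear_iff lin_def by auto

lemma relEF: "E (F v) = F (E v) + poly_op sc fp H v"
proof -
  have "E (F v) - F (E v) = poly_op sc fp H v" using Rmod unfolding is_R_module_def by blast
  then show ?thesis by (simp add: diff_eq_eq add.commute)
qed

lemma relHE: "E (H v) = H (E v) - E v"
proof -
  have "H (E v) - E (H v) = E v" using Rmod unfolding is_R_module_def by blast
  then show ?thesis by (simp add: algebra_simps)
qed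

lemma relHF: "F (H v) = H (F v) + F v"
proof -
  have "H (F v) - F (H v) = - F v" using Rmod unfolding is_R_module_def by blast
  then show ?thesis by (simp add: algebra_simps)
qed

lemma E_H': "E (H v) = poly_op sc [:-1,1:] H (E v)"
  by (simp add: pop_pCons linH relHE)

lemma F_H': "F (H v) = poly_op sc [:1,1:] H (F v)"
  by (simp add: pop_pCons linH relHF add.commute)

lemma E_pop: "E (poly_op sc g H v) = poly_op sc (pcompose g [:-1,1:]) H (E v)"
  by (simp add: pop_pcompose linH pop_intertwine[OF linE linH pop_lin[OF linH]] E_H')

lemma F_pop: "F (poly_op sc g H v) = poly_op sc (pcompose g [:1,1:]) H (F v)"
  by (simp add: pop_pcompose linH pop_intertwine[OF linF linH pop_lin[OF linH]] F_H')

lemma H_pop: "H (poly_op sc g H v) = poly_op sc g H (H v)"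
  by (rule pop_intertwine[OF linH linH linH]) simp

definition U1 where "U1 = pcompose u [:1,1:]"
definition Om where "Om = Omega_op sc u E F H"

lemma Om_eq: "Om v = sc 2 (F (E v)) + poly_op sc U1 H v"
  by (simp add: Om_def Omega_op_def U1_def)

lemma linOm: "lin Om"
  using linE linF pop_lin[OF linH] unfolding lin_def Om_eq
  by (simp add: scale_right_distrib algebra_simps)

lemma Om_H: "Om (H v) = H (Om v)"
proof -
  have "H (F (E v)) = F (E (H v))"
    by (simp add: relHE relHF linD[OF linF] lin_diff[OF linF])
  then show ?thesis
    by (simp add: Om_eq linD[OF linH] H_pop)
qed

lemma two_fp: "smult 2 fp = U1 - u"
  by (simp add: u_def U1_def)

lemma Om_E: "Om (E v) = E (Om v)"
proof -
  have u: "pcompose U1 [:-1,1:] = u"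
    by (simp add: U1_def pcompose_assoc[symmetric] pcompose_pCons)
  have "E (Om v) = sc 2 (E (F (E v))) + poly_op sc u H (E v)"
    by (simp add: Om_eq linD[OF linE] E_pop u)
  also have "\<dots> = sc 2 (F (E (E v))) + (poly_op sc (smult 2 fp) H (E v) + poly_op sc u H (E v))"
    by (simp add: relEF scale_right_distrib pop_smult)
  also have "\<dots> = Om (E v)"
    by (simp add: two_fp pop_diff Om_eq)
  finally show ?thesis by simp
qed

lemma Om_F: "Om (F v) = F (Om v)"
proof -
  have u: "pcompose U1 [:1,1:] = smult 2 (pcompose fp [:1,1:]) + U1"
    by (simp add: two_fp[symmetric] pcompose_smult[symmetric] u_def pcompose_diff U1_def pcompose_assoc[symmetric] pcompose_pCons)
  have "F (Om v) = sc 2 (F (F (E v))) + poly_op sc (pcompose U1 [:1,1:]) H (F v)"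
    by (simp add: Om_eq linD[OF linF] F_pop)
  also have "\<dots> = sc 2 (F (F (E v))) + sc 2 (F (poly_op sc fp H v)) + poly_op sc U1 H (F v)"
    by (simp add: u pop_add pop_smult F_pop add.assoc)
  also have "\<dots> = Om (F v)"
    by (simp add: Om_eq relEF linD[OF linF] scale_right_distrib)
  finally show ?thesis by simp
qed

definition X where "X v = E v - sc eta v"

lemma linX: "lin X"
  using linE unfolding lin_def X_def by (simp add: algebra_simps)

lemma X_H: "X (H v) = H (X v) - X v - sc eta v"
  by (simp add: X_def relHE lin_diff[OF linH] linD[OF linH] algebra_simps)

primrec Y :: "nat \<Rightarrow> 'v \<Rightarrow> 'v" where
  "Y 0 z = z"
| "Y (Suc j) z = sc (1 / of_nat (Suc j)) (H (Y j z) + sc (of_nat (Suc j)) (Y j z))"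

declare Y.simps(2) [simp del]

lemma linY: "lin (Y j)"
  by (induction j) (auto simp: lin_def linD[OF linH] algebra_simps Y.simps)

lemma H_Y: "H (Y j z) = sc (of_nat (Suc j)) (Y (Suc j) z) - sc (of_nat (Suc j)) (Y j z)"
proof -
  have "sc (of_nat (Suc j)) (Y (Suc j) z) = H (Y j z) + sc (of_nat (Suc j)) (Y j z)"
    by (simp add: Y.simps del: of_nat_Suc)
  then show ?thesis by (simp add: algebra_simps del: of_nat_Suc)
qed

lemma X_Y: assumes "X z = 0" shows "X (Y (Suc j) z) = sc (- eta) (Y j z)"
proof (induction j)
  case 0
  show ?case using assms by (simp add: linD[OF linX] X_H lin_zero[OF linH] Y.simps)
next
  case (Suc j)
  define a where "a = Y j z"
  define b where "b = Y (Suc j) z"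
  define m :: complex where "m = of_nat (Suc j)"
  have m1: "of_nat (Suc (Suc j)) = m + 1" by (simp add: m_def)
  have mnz: "m + 1 \<noteq> 0" using m1 by (metis of_nat_eq_0_iff nat.distinct(1))
  have IH: "X b = sc (-eta) a" using Suc by (simp add: a_def b_def)
  have Ha: "H a = sc m b - sc m a" using H_Y[of j z] by (simp add: a_def b_def m_def del: of_nat_Suc)
  have "X (Y (Suc (Suc j)) z) = sc (1/(m+1)) (X (H b) + sc (m+1) (X b))"
    by (simp add: b_def m1 linD[OF linX] Y.simps del: of_nat_Suc)
  also have "\<dots> = sc (1/(m+1)) (sc (-eta) (H a) + sc eta a - sc eta b + sc (m+1) (sc (-eta) a))"
    by (simp add: X_H IH linD[OF linH] lin_minus[OF linH] algebra_simps)
  also have "\<dots> = sc (1/(m+1)) (sc (-eta) (sc (m + 1) b))"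
    by (simp add: Ha algebra_simps)
  also have "\<dots> = sc (-eta) b"
    using mnz by simp
  finally show ?case by (simp add: b_def)
qed

lemma Xpow_Y: assumes "X z = 0" shows "(X ^^ i) (Y (i + j) z) = sc ((- eta) ^ i) (Y j z)"
proof (induction i arbitrary: j)
  case 0 then show ?case by simp
next
  case (Suc i)
  have "(X ^^ Suc i) (Y (Suc i + j) z) = X ((X ^^ i) (Y (i + Suc j) z))"
    by (simp only: funpow.simps o_apply add_Suc add_Suc_right)
  also have "\<dots> = X (sc ((- eta) ^ i) (Y (Suc j) z))" using Suc.IH[of "Suc j"] by (simp del: Y.simps)
  also have "\<dots> = sc ((- eta) ^ Suc i) (Y j z)"
    by (simp only: linD[OF linX] X_Y[OF assms] scale_scale power_Suc mult.commute)
  finally show ?case .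
qed

lemma Xpow_kill: assumes "X z = 0" "j \<le> k" shows "(X ^^ Suc k) (Y j z) = 0"
proof -
  have eq: "Suc k = (k - j) + (1 + j)" using assms(2) by simp
  have "(X ^^ Suc k) (Y j z) = (X ^^ (k - j)) ((X ^^ 1) ((X ^^ j) (Y j z)))"
    by (subst eq) (simp only: funpow_add o_apply)
  also have "(X ^^ j) (Y j z) = sc ((- eta) ^ j) z"
    using Xpow_Y[OF assms(1), of j 0] by simp
  also have "(X ^^ 1) (sc ((- eta) ^ j) z) = 0"
    using assms(1) by (simp add: linD[OF linX])
  also have "(X ^^ (k - j)) 0 = 0"
    by (rule lin_funpow_zero[OF linX])
  finally show ?thesis .
qed

definition Zv where "Zv c = poly_op sc c Om w"

lemma X_Zv: "X (Zv c) = 0"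
proof -
  have "E (Zv c) = poly_op sc c Om (E w)"
    unfolding Zv_def by (rule pop_intertwine[OF linE linOm linOm]) (simp add: Om_E)
  then show ?thesis by (simp add: X_def whit linD[OF pop_lin[OF linOm]] Zv_def)
qed

definition W where "W k = span {Y j (Zv c) | j c. j \<le> k}"

lemma W_mono: "k \<le> l \<Longrightarrow> W k \<subseteq> W l"
  unfolding W_def by (rule span_mono) auto

lemma Xpow_W: assumes "v \<in> W k" shows "(X ^^ Suc k) v = 0"
  using assms unfolding W_def
proof (induction rule: span_induct_alt)
  case base then show ?case by (simp add: lin_funpow_zero[OF linX] del: funpow.simps)
next
  case (step c x y)
  then obtain j d where "x = Y j (Zv d)" "j \<le> k" by auto
  then show ?case using step X_Zv Xpow_kill
    by (simp add: linD[OF lin_funpow[OF linX]] del: funpow.simps)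
qed

lemma Zv_add: "Zv (c + d) = Zv c + Zv d" by (simp add: Zv_def pop_add)
lemma Zv_smult: "Zv (smult a c) = sc a (Zv c)" by (simp add: Zv_def pop_smult)
lemma Zv_0: "Zv 0 = 0" by (simp add: Zv_def)
lemma Zv_1: "Zv 1 = w" by (simp add: Zv_def)

lemma W_gen: "j \<le> k \<Longrightarrow> Y j (Zv c) \<in> W k"
  unfolding W_def by (rule span_base) auto

lemma W0: assumes "v \<in> W 0" shows "\<exists>c. v = Zv c"
  using assms unfolding W_def
proof (induction rule: span_induct_alt)
  case base then show ?case using Zv_0 by metis
next
  case (step a x y)
  then obtain d c where "x = Zv d" "y = Zv c" by auto
  then have "sc a x + y = Zv (smult a d + c)" by (simp add: Zv_add Zv_smult)
  then show ?case by blast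
qed

lemma decomp: assumes "v \<in> W (Suc m)" shows "\<exists>c r. r \<in> W m \<and> v = Y (Suc m) (Zv c) + r"
  using assms unfolding W_def[of "Suc m"]
proof (induction rule: span_induct_alt)
  case base
  have "0 \<in> W m" by (simp add: W_def span_zero)
  then show ?case using Zv_0 lin_zero[OF linY] by (metis add_0)
next
  case (step a x y)
  then obtain j d where x: "x = Y j (Zv d)" "j \<le> Suc m" by auto
  from step obtain c r where r: "r \<in> W m" "y = Y (Suc m) (Zv c) + r" by auto
  show ?case
  proof (cases "j = Suc m")
    case True
    have "sc a x + y = Y (Suc m) (Zv (smult a d + c)) + r"
      by (simp add: x True r Zv_add Zv_smult linD[OF linY] add.assoc)
    then show ?thesis using r(1) by blast
  next
    case False
    then have "j \<le> m" using x by simp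
    then have "x \<in> W m" using x W_gen by simp
    then have "sc a x + r \<in> W m" using r(1) by (simp add: W_def span_add span_scale)
    moreover have "sc a x + y = Y (Suc m) (Zv c) + (sc a x + r)"
      by (simp add: r algebra_simps)
    ultimately show ?thesis by blast
  qed
qed

definition Wall where "Wall = {v. \<exists>k. v \<in> W k}"

lemma Wall_subspace: "subspace Wall"
proof (rule subspaceI)
  show "0 \<in> Wall" by (auto simp: Wall_def W_def span_zero)
next
  fix x y assume "x \<in> Wall" "y \<in> Wall"
  then obtain k l where "x \<in> W k" "y \<in> W l" by (auto simp: Wall_def)
  then have "x \<in> W (max k l)" "y \<in> W (max k l)" using W_mono by (meson max.cobounded1 max.cobounded2 subsetD)+
  then show "x + y \<in> Wall" by (auto simp: Wall_def W_def intro: span_add)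
next
  fix c x assume "x \<in> Wall"
  then show "sc c x \<in> Wall" by (auto simp: Wall_def W_def intro: span_scale)
qed

lemma W_Wall: "v \<in> W k \<Longrightarrow> v \<in> Wall" by (auto simp: Wall_def)

lemma E_W: assumes "v \<in> W k" shows "E v \<in> W k"
  using assms unfolding W_def[of k]
proof (induction rule: span_induct_alt)
  case base then show ?case by (simp add: lin_zero[OF linE] span_zero)
next
  case (step a x y)
  then obtain j d where x: "x = Y j (Zv d)" "j \<le> k" by auto
  have EX: "E x = X x + sc eta x" by (simp add: X_def)
  have "X x \<in> W k"
  proof (cases j)
    case 0 then show ?thesis using x X_Zv by (simp add: W_def span_zero)
  next
    case (Suc i)
    then show ?thesis using x X_Y[OF X_Zv] W_gen[of i k d] by (simp add: W_def span_scale span_neg)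
  qed
  moreover have "x \<in> W k" using x W_gen by simp
  ultimately have "E x \<in> W k" using EX by (simp add: W_def span_add span_scale)
  then show ?case using step by (simp add: linD[OF linE] W_def span_add span_scale)
qed

lemma H_W: assumes "v \<in> W k" shows "H v \<in> W (Suc k)"
  using assms unfolding W_def[of k]
proof (induction rule: span_induct_alt)
  case base then show ?case by (simp add: lin_zero[OF linH] W_def span_zero)
next
  case (step a x y)
  then obtain j d where x: "x = Y j (Zv d)" "j \<le> k" by auto
  have "Y (Suc j) (Zv d) \<in> W (Suc k)" "Y j (Zv d) \<in> W (Suc k)" using x W_gen by auto
  then have "H x \<in> W (Suc k)" using x H_Y by (simp add: W_def span_diff span_scale)
  then show ?case using step by (simp add: linD[OF linH] W_def span_add span_scale)
qed

lemma H_Wall: "v \<in> Wall \<Longrightarrow> H v \<in> Wall"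
  using H_W by (auto simp: Wall_def)

lemma popH_Wall: "v \<in> Wall \<Longrightarrow> poly_op sc g H v \<in> Wall"
  by (rule pop_closed[OF Wall_subspace H_Wall linH])

lemma Om_w: "Om w = sc (2 * eta) (F w) + poly_op sc U1 H w"
  by (simp add: Om_eq whit linD[OF linF])

lemma F_w: "F w = sc (1 / (2 * eta)) (Om w - poly_op sc U1 H w)"
  using eta_nz by (simp add: Om_w)

lemma popOm_H: "poly_op sc c Om (H x) = H (poly_op sc c Om x)"
  by (rule pop_intertwine[OF linH linOm linOm, symmetric]) (simp add: Om_H)

lemma F_Zv: "F (Zv c) \<in> Wall"
proof -
  have "F (Zv c) = poly_op sc c Om (F w)"
    unfolding Zv_def by (rule pop_intertwine[OF linF linOm linOm]) (simp add: Om_F)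
  also have "\<dots> = sc (1 / (2 * eta)) (poly_op sc c Om (Om w) - poly_op sc c Om (poly_op sc U1 H w))"
    by (simp add: F_w linD[OF pop_lin[OF linOm]] lin_diff[OF pop_lin[OF linOm]])
  also have "poly_op sc c Om (Om w) = Zv (c * [:0,1:])"
    unfolding Zv_def by (simp only: pop_mult[OF linOm] pop_X[OF linOm])
  also have "poly_op sc c Om (poly_op sc U1 H w) = poly_op sc U1 H (Zv c)"
    unfolding Zv_def by (rule pop_intertwine[OF pop_lin[OF linOm] linH linH]) (simp add: popOm_H)
  finally show ?thesis
    using W_Wall[OF W_gen[of 0 0 "c * [:0,1:]"]] popH_Wall[OF W_Wall[OF W_gen[of 0 0 c]]]
    by (simp add: Wall_subspace subspace_diff subspace_scale)
qed

lemma F_Y: "F (Y j (Zv c)) \<in> Wall"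
proof (induction j)
  case 0 then show ?case using F_Zv by simp
next
  case (Suc j)
  let ?a = "F (Y j (Zv c))"
  have "F (Y (Suc j) (Zv c)) = sc (1 / of_nat (Suc j)) (H ?a + ?a + sc (of_nat (Suc j)) ?a)"
    by (simp only: Y.simps linD[OF linF] relHF)
  then show ?case using Suc H_Wall[OF Suc]
    by (simp add: Wall_subspace subspace_add subspace_scale del: of_nat_Suc)
qed

lemma F_W: assumes "v \<in> W k" shows "F v \<in> Wall"
  using assms unfolding W_def[of k]
proof (induction rule: span_induct_alt)
  case base then show ?case by (simp add: lin_zero[OF linF] Wall_subspace subspace_0)
next
  case (step a x y)
  then obtain j d where x: "x = Y j (Zv d)" by auto
  then show ?case using step F_Y
    by (simp add: linD[OF linF] Wall_subspace subspace_add subspace_scale)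
qed

lemma Wall_sub: "is_submodule sc E F H Wall"
proof -
  have "E ` Wall \<subseteq> Wall" using E_W by (auto simp: Wall_def)
  moreover have "H ` Wall \<subseteq> Wall" using H_Wall by auto
  moreover have "F ` Wall \<subseteq> Wall"
  proof
    fix x assume "x \<in> F ` Wall"
    then obtain v k where "x = F v" "v \<in> W k" by (auto simp: Wall_def)
    then show "x \<in> Wall" using F_W by simp
  qed
  ultimately show ?thesis unfolding is_submodule_def using Wall_subspace by blast
qed

lemma Wall_UNIV: "Wall = UNIV"
proof -
  have "w \<in> Wall" using W_Wall[OF W_gen[of 0 0 1]] by (simp add: Zv_1)
  then have "gen_submodule sc E F H {w} \<subseteq> Wall"
    using Wall_sub unfolding gen_submodule_def by blast
  then show ?thesis using cyclic by blast
qed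

lemma in_some_W: "\<exists>k. v \<in> W k"
  using Wall_UNIV by (auto simp: Wall_def)

lemma sub_subspace: "is_submodule sc E F H S \<Longrightarrow> subspace S"
  by (simp add: is_submodule_def)
lemma sub_E: "is_submodule sc E F H S \<Longrightarrow> x \<in> S \<Longrightarrow> E x \<in> S"
  by (auto simp: is_submodule_def)
lemma sub_F: "is_submodule sc E F H S \<Longrightarrow> x \<in> S \<Longrightarrow> F x \<in> S"
  by (auto simp: is_submodule_def)
lemma sub_H: "is_submodule sc E F H S \<Longrightarrow> x \<in> S \<Longrightarrow> H x \<in> S"
  by (auto simp: is_submodule_def)
lemma sub_X: "is_submodule sc E F H S \<Longrightarrow> x \<in> S \<Longrightarrow> X x \<in> S"
  by (simp add: X_def sub_E sub_subspace subspace_diff subspace_scale)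
lemma sub_Xpow: "is_submodule sc E F H S \<Longrightarrow> x \<in> S \<Longrightarrow> (X ^^ n) x \<in> S"
  by (induction n) (simp_all add: sub_X)
lemma sub_Om: assumes "is_submodule sc E F H S" "x \<in> S" shows "Om x \<in> S"
proof -
  have "poly_op sc U1 H x \<in> S"
    using pop_closed[OF sub_subspace[OF assms(1)] sub_H[OF assms(1)] linH assms(2)] .
  then show ?thesis
    using assms by (simp add: Om_eq sub_E sub_F sub_subspace subspace_add subspace_scale)
qed
lemma sub_popOm: "is_submodule sc E F H S \<Longrightarrow> x \<in> S \<Longrightarrow> poly_op sc c Om x \<in> S"
  by (rule pop_closed[OF sub_subspace]) (auto simp: sub_Om linOm)
lemma sub_Y: "is_submodule sc E F H S \<Longrightarrow> x \<in> S \<Longrightarrow> Y j x \<in> S"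
  by (induction j) (simp_all add: Y.simps sub_H sub_subspace subspace_add subspace_scale)

lemma gen_sub: "is_submodule sc E F H (gen_submodule sc E F H A)"
proof -
  let ?C = "{S. is_submodule sc E F H S \<and> A \<subseteq> S}"
  have "subspace (\<Inter>?C)"
  proof (rule subspaceI)
    show "0 \<in> \<Inter>?C" by (auto dest: sub_subspace intro: subspace_0)
    show "x + y \<in> \<Inter>?C" if "x \<in> \<Inter>?C" "y \<in> \<Inter>?C" for x y
      using that by (auto dest: sub_subspace intro: subspace_add)
    show "sc c x \<in> \<Inter>?C" if "x \<in> \<Inter>?C" for c x
      using that by (auto dest: sub_subspace intro: subspace_scale)
  qed
  moreover have "E ` \<Inter>?C \<subseteq> \<Inter>?C" by (auto intro: sub_E)
  moreover have "F ` \<Inter>?C \<subseteq> \<Inter>?C" by (auto intro: sub_F)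
  moreover have "H ` \<Inter>?C \<subseteq> \<Inter>?C" by (auto intro: sub_H)
  ultimately show ?thesis unfolding gen_submodule_def is_submodule_def by blast
qed
lemma gen_in: "x \<in> gen_submodule sc E F H {x}"
  unfolding gen_submodule_def by blast
lemma gen_least: "is_submodule sc E F H S \<Longrightarrow> x \<in> S \<Longrightarrow> gen_submodule sc E F H {x} \<subseteq> S"
  unfolding gen_submodule_def by blast

lemma whit_mod: assumes U: "is_submodule sc E F H U"
  shows "v \<in> W k \<Longrightarrow> X v \<in> U \<Longrightarrow> \<exists>c. v - Zv c \<in> U"
proof (induction k arbitrary: v)
  case 0
  then obtain c where "v = Zv c" using W0 by blast
  then have "v - Zv c = 0" by simp
  then show ?case using subspace_0[OF sub_subspace[OF U]] by metis
next
  case (Suc m)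
  obtain c r where r: "r \<in> W m" "v = Y (Suc m) (Zv c) + r" using decomp[OF Suc.prems(1)] by blast
  have Xv: "X v = sc (- eta) (Y m (Zv c)) + X r"
    using r by (simp add: linD[OF linX] X_Y[OF X_Zv])
  have "(X ^^ m) (X v) \<in> U" using sub_Xpow[OF U Suc.prems(2)] .
  also have "(X ^^ m) (X v) = sc (- eta) ((X ^^ m) (Y m (Zv c))) + (X ^^ Suc m) r"
    by (simp only: Xv linD[OF lin_funpow[OF linX]] funpow_Suc_right o_apply)
  also have "(X ^^ m) (Y m (Zv c)) = sc ((- eta) ^ m) (Zv c)"
    using Xpow_Y[OF X_Zv, of m 0 c] by simp
  also have "sc (- eta) (sc ((- eta) ^ m) (Zv c)) + (X ^^ Suc m) r = sc ((- eta) ^ Suc m) (Zv c)"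
    by (simp only: Xpow_W[OF r(1)] add_0_right scale_scale power_Suc)
  finally have "sc ((- eta) ^ Suc m) (Zv c) \<in> U" .
  then have "sc (1 / (- eta) ^ Suc m) (sc ((- eta) ^ Suc m) (Zv c)) \<in> U"
    using subspace_scale[OF sub_subspace[OF U]] by blast
  then have Zc: "Zv c \<in> U" using eta_nz by simp
  then have YU: "Y (Suc m) (Zv c) \<in> U" using sub_Y[OF U] by blast
  have "X r = X v - X (Y (Suc m) (Zv c))" using r by (simp add: linD[OF linX])
  then have "X r \<in> U" using sub_X[OF U YU] Suc.prems(2) sub_subspace[OF U] by (simp add: subspace_diff)
  then obtain c' where "r - Zv c' \<in> U" using Suc.IH[OF r(1)] by blast
  then have "Y (Suc m) (Zv c) + (r - Zv c') \<in> U" using YU sub_subspace[OF U] by (simp add: subspace_add)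
  then show ?case using r by (metis add_diff_eq)
qed

theorem main_loc:
  fixes p :: "complex poly" and n :: nat
  assumes irr: "irreducible p"
    and pn: "\<forall>v. poly_op sc (p ^ n) Om v = 0"
    and V': "is_submodule sc E F H V'"
  shows "\<exists>i\<le>n. V' = gen_submodule sc E F H {Zv (p ^ i)}"
proof -
  define I where "I = {q. Zv q \<in> V'}"
  have Imult: "a * q \<in> I" if "q \<in> I" for a q
    using that sub_popOm[OF V'] by (simp add: I_def Zv_def pop_mult[OF linOm])
  have Iadd: "q1 + q2 \<in> I" if "q1 \<in> I" "q2 \<in> I" for q1 q2
    using that sub_subspace[OF V'] by (simp add: I_def Zv_add subspace_add)
  have "p ^ n \<in> I" using pn sub_subspace[OF V'] by (simp add: I_def Zv_def subspace_0)
  define i where "i = (LEAST i. p ^ i \<in> I)"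
  have pi: "p ^ i \<in> I" unfolding i_def by (rule LeastI) fact
  have iln: "i \<le> n" unfolding i_def by (rule Least_le) fact
  have pe: "prime (normalize p)" using irr by (simp add: prime_elem_iff_irreducible)
  have dv: "p ^ i dvd q" if q: "q \<in> I" for q
  proof -
    define g where "g = gcd q (p ^ i)"
    have "fst (bezout_coefficients q (p ^ i)) * q + snd (bezout_coefficients q (p ^ i)) * p ^ i \<in> I"
      by (intro Iadd Imult q pi)
    then have gI: "g \<in> I"
      unfolding g_def bezout_coefficients_fst_snd .
    have "g dvd normalize p ^ i" by (simp add: g_def normalize_power[symmetric])
    then obtain m where m: "m \<le> i" "normalize g = normalize p ^ m"
      using divides_primepow[OF pe] by blast
    then have "normalize g = normalize (p ^ m)" by (simp add: normalize_power)
    then have "g dvd p ^ m" "p ^ m dvd g" by (auto intro: associatedD1 associatedD2)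
    then obtain k where "p ^ m = g * k" using \<open>g dvd p ^ m\<close> by (auto elim: dvdE)
    then have "p ^ m = k * g" by (simp add: mult.commute)
    then have "p ^ m \<in> I" using Imult[OF gI] by simp
    then have "i \<le> m" unfolding i_def by (rule Least_le)
    then have "m = i" using m by simp
    then have "p ^ i dvd g" using \<open>p ^ m dvd g\<close> by simp
    moreover have "g dvd q" unfolding g_def by (rule gcd_dvd1)
    ultimately show ?thesis by (rule dvd_trans)
  qed
  define U where "U = gen_submodule sc E F H {Zv (p ^ i)}"
  have Usub: "is_submodule sc E F H U" unfolding U_def by (rule gen_sub)
  have UV: "U \<subseteq> V'" unfolding U_def using gen_least[OF V'] pi by (simp add: I_def)
  have VU: "V' \<subseteq> U"
  proof
    fix v assume v: "v \<in> V'"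
    show "v \<in> U"
    proof (rule ccontr)
      assume nv: "v \<notin> U"
      obtain k where "v \<in> W k" using in_some_W by blast
      then have "(X ^^ Suc k) v \<in> U"
        using Xpow_W sub_subspace[OF Usub] by (simp add: subspace_0 del: funpow.simps)
      define N where "N = (LEAST N. (X ^^ N) v \<in> U)"
      have XN: "(X ^^ N) v \<in> U" unfolding N_def by (rule LeastI) fact
      have "N \<noteq> 0" using XN nv by (metis funpow_0)
      then obtain M where M: "N = Suc M" by (cases N) auto
      have nM: "(X ^^ M) v \<notin> U" using not_less_Least[of M "\<lambda>N. (X ^^ N) v \<in> U"] M N_def by simp
      define v1 where "v1 = (X ^^ M) v"
      have Xv1: "X v1 \<in> U" using XN M by (simp add: v1_def)
      have v1V: "v1 \<in> V'" using sub_Xpow[OF V' v] by (simp add: v1_def)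
      obtain k' where "v1 \<in> W k'" using in_some_W by blast
      then obtain c where c: "v1 - Zv c \<in> U" using whit_mod[OF Usub] Xv1 by blast
      then have "v1 - Zv c \<in> V'" using UV by blast
      then have "v1 - (v1 - Zv c) \<in> V'" using subspace_diff[OF sub_subspace[OF V'] v1V] by blast
      then have "Zv c \<in> V'" by simp
      then have "p ^ i dvd c" using dv by (simp add: I_def)
      then obtain d where "c = p ^ i * d" by (rule dvdE)
      then have "c = d * p ^ i" by (simp add: mult.commute)
      then have "Zv c = poly_op sc d Om (Zv (p ^ i))" by (simp add: Zv_def pop_mult[OF linOm])
      then have "Zv c \<in> U" using sub_popOm[OF Usub] gen_in by (simp add: U_def)
      then have "(v1 - Zv c) + Zv c \<in> U" using subspace_add[OF sub_subspace[OF Usub] c] by blast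
      then have "v1 \<in> U" by simp
      then show False using nM v1_def by simp
    qed
  qed
  show ?thesis using UV VU iln U_def by blast
qed

end

theorem mainTheorem13:
  fixes sc :: "complex \<Rightarrow> 'v::ab_group_add \<Rightarrow> 'v"
    and fp u p :: "complex poly"
    and E F H :: "'v \<Rightarrow> 'v"
    and eta :: complex and w :: 'v and n :: nat
  assumes u_def: "fp = smult (1/2) (pcompose u [:1, 1:] - u)"
    and Rmod: "is_R_module sc fp E F H"
    and eta_nz: "eta \<noteq> 0"
    and whit: "E w = sc eta w"
    and cyclic: "gen_submodule sc E F H {w} = UNIV"
    and indec: "indecomposable sc E F H TYPE('v)"
    and irr: "irreducible p"
    and n_pos: "n \<ge> 1"
    and ZV: "\<forall>q. (\<forall>v. poly_op sc q (Omega_op sc u E F H) v = 0) \<longleftrightarrow> p ^ n dvd q"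
  shows "\<forall>V'. is_submodule sc E F H V' \<longrightarrow>
           (\<exists>i\<le>n. V' = gen_submodule sc E F H {poly_op sc (p ^ i) (Omega_op sc u E F H) w})"
proof (intro allI impI)
  fix V' assume V': "is_submodule sc E F H V'"
  have vs: "vector_space sc" using Rmod by (simp add: is_R_module_def)
  interpret WS sc fp u E F H eta w
    by (rule WS.intro[OF VS.intro[OF vs]]) (unfold_locales, fact+)
  have pn: "\<forall>v. poly_op sc (p ^ n) Om v = 0" using ZV by (simp add: Om_def)
  show "\<exists>i\<le>n. V' = gen_submodule sc E F H {poly_op sc (p ^ i) (Omega_op sc u E F H) w}"
    using main_loc[OF irr pn V'] by (simp add: Zv_def Om_def)
qed

end
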